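(* Let $X\subseteq\mathbb{C}^n$ be a complex analytic set and $\mathcal M\subseteq\mathcal O_X^p$ a sheaf of $\mathcal O_X$-submodules. Then $(\mathcal M_{S_1})_x\subseteq(\mathcal M_{S_2})_x$ for every $x\in X$.
   Context: $\pi_1,\pi_2:X\times X\to X$ are the projections. For $h\in\mathcal O_X^p$, $h_D=(h\circ\pi_1,h\circ\pi_2)\in\mathcal O_{X\times X}^{2p}$; for a submodule $N\subseteq\mathcal O_X^q$ (in particular an ideal, $q=1$), $N_D$ is the $\mathcal O_{X\times X}$-submodule of $\mathcal O^{2q}_{X\times X}$ generated by $\{h_D:h\in N\}$. $\overline{\cdot}$ denotes integral closure. For an ideal $I\subseteq\mathcal O_{X,x}$, its Lipschitz saturation is $I_S=\{f\in\mathcal O_{X,x}: f_D\in\overline{I_D}\text{ at }(x,x)\}$. For analytic $\psi=(\psi_1,\dots,\psi_p):X\to\mathrm{Hom}(\mathbb C^p,\mathbb C)$, $\psi\cdot h=\sum\psi_ih_i$ and $\psi\cdot\mathcal M$ is the ideal generated by $\{\psi\cdot h:h\in\mathcal M\}$. Definitions: $(\mathcal M_{S_1})_x=\{h\in\mathcal O_{X,x}^p: h_D\in\overline{\mathcal M_D}\text{ at }(x,x)\}$; $(\mathcal M_{S_2})_x=\{h\in\mathcal O_{X,x}^p:\psi\cdot h\in(\psi\cdot\mathcal M)_S\text{ at }x\text{ for all analytic }\psi\}$. *)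

theory Defs
  imports "HOL-Analysis.Analysis"
begin

definition cholo_on :: "(complex^'m) set \<Rightarrow> (complex^'m \<Rightarrow> complex) \<Rightarrow> bool" where
  "cholo_on U f \<longleftrightarrow> (\<forall>x\<in>U. \<exists>L. linear L \<and> (\<forall>c v. L (c *s v) = c * L v)
        \<and> (f has_derivative L) (at x))"

definition analytic_set :: "(complex^'m) set \<Rightarrow> bool" where
  "analytic_set X \<longleftrightarrow> (\<forall>a\<in>X. \<exists>U F. open U \<and> a \<in> U \<and> finite F \<and>
        (\<forall>f\<in>F. cholo_on U f) \<and> X \<inter> U = {z\<in>U. \<forall>f\<in>F. f z = 0})"

(* g represents an element of O_{Y,y} *)
definition agerm :: "(complex^'m) set \<Rightarrow> complex^'m \<Rightarrow> (complex^'m \<Rightarrow> complex) \<Rightarrow> bool" where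
  "agerm Y y g \<longleftrightarrow> (\<exists>U G. open U \<and> y \<in> U \<and> cholo_on U G \<and> (\<forall>z\<in>Y \<inter> U. g z = G z))"

(* h represents an element of O_{Y,y}^q *)
definition vgerm :: "(complex^'m) set \<Rightarrow> complex^'m \<Rightarrow> (complex^'m \<Rightarrow> complex^'q) \<Rightarrow> bool" where
  "vgerm Y y h \<longleftrightarrow> (\<forall>i. agerm Y y (\<lambda>z. h z $ i))"

(* N is (the set of representatives of) an O_{X,x}-submodule of O_{X,x}^q *)
definition submod_stalk :: "(complex^'m) set \<Rightarrow> complex^'m \<Rightarrow> (complex^'m \<Rightarrow> complex^'q) set \<Rightarrow> bool" where
  "submod_stalk X x N \<longleftrightarrow>
     (\<forall>h\<in>N. vgerm X x h) \<and> (\<lambda>z. 0) \<in> N \<and>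
     (\<forall>g\<in>N. \<forall>h\<in>N. (\<lambda>z. g z + h z) \<in> N) \<and>
     (\<forall>a h. agerm X x a \<longrightarrow> h \<in> N \<longrightarrow> (\<lambda>z. a z *s h z) \<in> N) \<and>
     (\<forall>h\<in>N. \<forall>h'. (\<exists>U. open U \<and> x \<in> U \<and> (\<forall>z\<in>X \<inter> U. h' z = h z)) \<longrightarrow> h' \<in> N)"

definition gen_mod :: "(complex^'m) set \<Rightarrow> complex^'m \<Rightarrow> (complex^'m \<Rightarrow> complex^'q) set
     \<Rightarrow> (complex^'m \<Rightarrow> complex^'q) set" where
  "gen_mod Y y S = {g. \<exists>(k::nat) a s. (\<forall>i<k. agerm Y y (a i) \<and> s i \<in> S) \<and>
       (\<exists>U. open U \<and> y \<in> U \<and> (\<forall>z\<in>Y \<inter> U. g z = (\<Sum>i<k. a i z *s s i z)))}"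

definition acurve :: "(complex^'m) set \<Rightarrow> complex^'m \<Rightarrow> (complex \<Rightarrow> complex^'m) \<Rightarrow> bool" where
  "acurve Y y \<phi> \<longleftrightarrow> \<phi> 0 = y \<and>
     (\<exists>r>0. (\<forall>i. (\<lambda>t. \<phi> t $ i) holomorphic_on ball 0 r) \<and> \<phi> ` ball 0 r \<subseteq> Y)"

(* integral closure of a submodule N of O_{Y,y}^q (curve criterion, Gaffney):
   h \<in> closure iff for every curve \<phi>, h\<circ>\<phi> \<in> O_1 \<cdot> \<phi>^*(N) *)
definition int_cl :: "(complex^'m) set \<Rightarrow> complex^'m \<Rightarrow> (complex^'m \<Rightarrow> complex^'q) set
     \<Rightarrow> (complex^'m \<Rightarrow> complex^'q) set" where
  "int_cl Y y N = {h. vgerm Y y h \<and> (\<forall>\<phi>. acurve Y y \<phi> \<longrightarrow>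
       (\<exists>e>0. \<exists>(k::nat) a s. (\<forall>i<k. a i holomorphic_on ball 0 e \<and> s i \<in> N) \<and>
          (\<forall>t\<in>ball 0 e. h (\<phi> t) = (\<Sum>i<k. a i t *s s i (\<phi> t)))))}"

(* the double X x X inside C^n x C^n = C^(n+n) *)
definition p1 :: "complex^('n+'n) \<Rightarrow> complex^'n" where
  "p1 z = (\<chi> j. z $ Inl j)"

definition p2 :: "complex^('n+'n) \<Rightarrow> complex^'n" where
  "p2 z = (\<chi> j. z $ Inr j)"

definition dpt :: "complex^'n \<Rightarrow> complex^'n \<Rightarrow> complex^('n+'n)" where
  "dpt a b = (\<chi> i. case i of Inl j \<Rightarrow> a $ j | Inr j \<Rightarrow> b $ j)"

definition dbl :: "(complex^'n) set \<Rightarrow> (complex^('n+'n)) set" where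
  "dbl X = {z. p1 z \<in> X \<and> p2 z \<in> X}"

definition dfun :: "(complex^'n \<Rightarrow> complex^'q) \<Rightarrow> complex^('n+'n) \<Rightarrow> complex^('q+'q)" where
  "dfun h z = (\<chi> i. case i of Inl j \<Rightarrow> h (p1 z) $ j | Inr j \<Rightarrow> h (p2 z) $ j)"

(* {h \<in> O_{X,x}^q : h_D \<in> closure(N_D) at (x,x)}; for q = 1 this is the
   Lipschitz saturation of the ideal N *)
definition lip_sat :: "(complex^'n) set \<Rightarrow> complex^'n \<Rightarrow> (complex^'n \<Rightarrow> complex^'q) set
     \<Rightarrow> (complex^'n \<Rightarrow> complex^'q) set" where
  "lip_sat X x N = {h. vgerm X x h \<and>
      dfun h \<in> int_cl (dbl X) (dpt x x) (gen_mod (dbl X) (dpt x x) (dfun ` N))}"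

definition psi_dot :: "(complex^'n \<Rightarrow> complex^'p) \<Rightarrow> (complex^'n \<Rightarrow> complex^'p) \<Rightarrow> complex^'n \<Rightarrow> complex^1" where
  "psi_dot \<psi> h z = (\<chi> _. \<Sum>i\<in>UNIV. \<psi> z $ i * h z $ i)"

definition MS1 :: "(complex^'n) set \<Rightarrow> (complex^'n \<Rightarrow> (complex^'n \<Rightarrow> complex^'p) set) \<Rightarrow> complex^'n
     \<Rightarrow> (complex^'n \<Rightarrow> complex^'p) set" where
  "MS1 X M x = lip_sat X x (M x)"

definition MS2 :: "(complex^'n) set \<Rightarrow> (complex^'n \<Rightarrow> (complex^'n \<Rightarrow> complex^'p) set) \<Rightarrow> complex^'n
     \<Rightarrow> (complex^'n \<Rightarrow> complex^'p) set" where
  "MS2 X M x = {h. vgerm X x h \<and> (\<forall>\<psi>. vgerm X x \<psi> \<longrightarrow>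
      psi_dot \<psi> h \<in> lip_sat X x (gen_mod X x (psi_dot \<psi> ` M x)))}"

end

theory Submission
  imports Defs
begin

lemma cholo_mono: "cholo_on U f \<Longrightarrow> V \<subseteq> U \<Longrightarrow> cholo_on V f"
  unfolding cholo_on_def by blast

lemma cholo_const: "cholo_on U (\<lambda>z. c)"
  unfolding cholo_on_def
  by (intro ballI exI[of _ "\<lambda>v. 0"]) (auto intro: linearI derivative_intros)

lemma cholo_mult:
  assumes "cholo_on U F" "cholo_on U G" shows "cholo_on U (\<lambda>z. F z * G z)"
  unfolding cholo_on_def
proof
  fix x assume x: "x \<in> U"
  obtain LF where F: "linear LF" "\<forall>c v. LF (c *s v) = c * LF v" "(F has_derivative LF) (at x)"
    using assms(1) x unfolding cholo_on_def by blast
  obtain LG where G: "linear LG" "\<forall>c v. LG (c *s v) = c * LG v" "(G has_derivative LG) (at x)"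
    using assms(2) x unfolding cholo_on_def by blast
  have d: "((\<lambda>z. F z * G z) has_derivative (\<lambda>h. F x * LG h + LF h * G x)) (at x)"
    using has_derivative_mult[OF F(3) G(3)] .
  show "\<exists>L. linear L \<and> (\<forall>c v. L (c *s v) = c * L v) \<and> ((\<lambda>z. F z * G z) has_derivative L) (at x)"
    using d has_derivative_linear[OF d] F(2) G(2) by (intro exI[of _ "\<lambda>h. F x * LG h + LF h * G x"]) (auto simp: algebra_simps)
qed

lemma cholo_add:
  assumes "cholo_on U F" "cholo_on U G" shows "cholo_on U (\<lambda>z. F z + G z)"
  unfolding cholo_on_def
proof
  fix x assume x: "x \<in> U"
  obtain LF where F: "linear LF" "\<forall>c v. LF (c *s v) = c * LF v" "(F has_derivative LF) (at x)"
    using assms(1) x unfolding cholo_on_def by blast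
  obtain LG where G: "linear LG" "\<forall>c v. LG (c *s v) = c * LG v" "(G has_derivative LG) (at x)"
    using assms(2) x unfolding cholo_on_def by blast
  have d: "((\<lambda>z. F z + G z) has_derivative (\<lambda>h. LF h + LG h)) (at x)"
    using has_derivative_add[OF F(3) G(3)] .
  show "\<exists>L. linear L \<and> (\<forall>c v. L (c *s v) = c * L v) \<and> ((\<lambda>z. F z + G z) has_derivative L) (at x)"
    using d has_derivative_linear[OF d] F(2) G(2) by (intro exI[of _ "\<lambda>h. LF h + LG h"]) (auto simp: algebra_simps)
qed

lemma cholo_sum:
  assumes "finite I" "\<And>i. i \<in> I \<Longrightarrow> cholo_on U (f i)"
  shows "cholo_on U (\<lambda>z. \<Sum>i\<in>I. f i z)"
  using assms by (induction I rule: finite_induct) (auto intro: cholo_add cholo_const)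

lemma agerm_mult:
  assumes "agerm Y y f" "agerm Y y g" shows "agerm Y y (\<lambda>z. f z * g z)"
proof -
  obtain U F where U: "open U" "y \<in> U" "cholo_on U F" "\<forall>z\<in>Y \<inter> U. f z = F z"
    using assms(1) unfolding agerm_def by blast
  obtain V G where V: "open V" "y \<in> V" "cholo_on V G" "\<forall>z\<in>Y \<inter> V. g z = G z"
    using assms(2) unfolding agerm_def by blast
  show ?thesis unfolding agerm_def
    using U V by (intro exI[of _ "U \<inter> V"] exI[of _ "\<lambda>z. F z * G z"])
      (auto intro!: cholo_mult elim: cholo_mono)
qed

lemma agerm_add:
  assumes "agerm Y y f" "agerm Y y g" shows "agerm Y y (\<lambda>z. f z + g z)"
proof -
  obtain U F where U: "open U" "y \<in> U" "cholo_on U F" "\<forall>z\<in>Y \<inter> U. f z = F z"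
    using assms(1) unfolding agerm_def by blast
  obtain V G where V: "open V" "y \<in> V" "cholo_on V G" "\<forall>z\<in>Y \<inter> V. g z = G z"
    using assms(2) unfolding agerm_def by blast
  show ?thesis unfolding agerm_def
    using U V by (intro exI[of _ "U \<inter> V"] exI[of _ "\<lambda>z. F z + G z"])
      (auto intro!: cholo_add elim: cholo_mono)
qed

lemma agerm_const: "agerm Y y (\<lambda>z. c)"
  unfolding agerm_def by (intro exI[of _ UNIV] exI[of _ "\<lambda>z. c"]) (auto intro: cholo_const)

lemma agerm_sum:
  assumes "finite I" "\<And>i. i \<in> I \<Longrightarrow> agerm Y y (f i)"
  shows "agerm Y y (\<lambda>z. \<Sum>i\<in>I. f i z)"
  using assms by (induction I rule: finite_induct) (auto intro: agerm_add agerm_const)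

lemma linear_p1: "linear p1"
  by (rule linearI) (auto simp: p1_def vec_eq_iff)
lemma linear_p2: "linear p2"
  by (rule linearI) (auto simp: p2_def vec_eq_iff)

lemma p1_smult: "\<forall>c v. p1 (c *s v) = c *s p1 v" by (simp add: p1_def vec_eq_iff)
lemma p2_smult: "\<forall>c v. p2 (c *s v) = c *s p2 v" by (simp add: p2_def vec_eq_iff)

lemma p1_dpt[simp]: "p1 (dpt a b) = a" by (simp add: p1_def dpt_def vec_eq_iff)
lemma p2_dpt[simp]: "p2 (dpt a b) = b" by (simp add: p2_def dpt_def vec_eq_iff)

lemma cholo_comp_lin:
  fixes P :: "complex^'a \<Rightarrow> complex^'b"
  assumes "linear P" "\<forall>c v. P (c *s v) = c *s P v" "cholo_on U F"
  shows "cholo_on (P -` U) (\<lambda>z. F (P z))"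
  unfolding cholo_on_def
proof
  fix x assume x: "x \<in> P -` U"
  obtain L where L: "linear L" "\<forall>c v. L (c *s v) = c * L v" "(F has_derivative L) (at (P x))"
    using assms(3) x unfolding cholo_on_def by blast
  have bl: "bounded_linear P" using assms(1) linear_conv_bounded_linear by blast
  have dP: "(P has_derivative P) (at x)" using bl by (rule bounded_linear_imp_has_derivative)
  have d: "((\<lambda>z. F (P z)) has_derivative (\<lambda>v. L (P v))) (at x)"
    using has_derivative_compose[OF dP L(3)] by (simp add: o_def)
  show "\<exists>L. linear L \<and> (\<forall>c v. L (c *s v) = c * L v) \<and> ((\<lambda>z. F (P z)) has_derivative L) (at x)"
    using d has_derivative_linear[OF d] L(2) assms(2) by (intro exI[of _ "\<lambda>v. L (P v)"]) auto
qed

lemma agerm_comp_lin: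
  fixes P :: "complex^'a \<Rightarrow> complex^'b"
  assumes "linear P" "\<forall>c v. P (c *s v) = c *s P v" "agerm Y (P y) g" "\<And>z. z \<in> Z \<Longrightarrow> P z \<in> Y"
  shows "agerm Z y (\<lambda>z. g (P z))"
proof -
  obtain U F where U: "open U" "P y \<in> U" "cholo_on U F" "\<forall>z\<in>Y \<inter> U. g z = F z"
    using assms(3) unfolding agerm_def by blast
  have bl: "bounded_linear P" using assms(1) linear_conv_bounded_linear by blast
  have "continuous_on UNIV P" using bl linear_continuous_on by blast
  hence o: "open (P -` U)" using U(1) open_vimage by blast
  show ?thesis unfolding agerm_def
    using U o assms(4) by (intro exI[of _ "P -` U"] exI[of _ "\<lambda>z. F (P z)"])
      (auto intro!: cholo_comp_lin assms(1,2))
qed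

definition pd :: "(complex^'n \<Rightarrow> complex^'p) \<Rightarrow> complex^('n+'n) \<Rightarrow> complex^('p+'p) \<Rightarrow> complex^(1+1)" where
  "pd \<psi> z v = (\<chi> i. case i of Inl _ \<Rightarrow> \<Sum>j\<in>UNIV. \<psi> (p1 z) $ j * v $ Inl j
                              | Inr _ \<Rightarrow> \<Sum>j\<in>UNIV. \<psi> (p2 z) $ j * v $ Inr j)"

lemma pd_dfun: "pd \<psi> z (dfun m z) = dfun (psi_dot \<psi> m) z"
  by (auto simp: vec_eq_iff pd_def dfun_def psi_dot_def split: sum.split)

lemma pd_lin: "pd \<psi> z (\<Sum>i<k. a i *s v i) = (\<Sum>i<k. a i *s pd \<psi> z (v i))"
  by (auto simp: vec_eq_iff pd_def sum_distrib_left sum.swap[of _ UNIV] mult.left_commute split: sum.split)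

lemma dfun_psi: "dfun (psi_dot \<psi> h) z = pd \<psi> z (dfun h z)"
  by (simp add: pd_dfun)

lemma vgerm_psi:
  assumes "vgerm X x h" "vgerm X x \<psi>"
  shows "vgerm X x (psi_dot \<psi> h)"
  using assms unfolding vgerm_def psi_dot_def
  by (auto intro!: agerm_sum agerm_mult)

lemma vgerm_dfun:
  fixes g :: "complex^'n \<Rightarrow> complex^'q"
  assumes "vgerm X x g"
  shows "vgerm (dbl X) (dpt x x) (dfun g)"
  unfolding vgerm_def
proof
  fix i :: "'q + 'q"
  show "agerm (dbl X) (dpt x x) (\<lambda>z. dfun g z $ i)"
  proof (cases i)
    case (Inl j)
    have "agerm (dbl X) (dpt x x) (\<lambda>z. g (p1 z) $ j)"
      by (rule agerm_comp_lin[OF linear_p1 p1_smult]) (use assms in \<open>auto simp: vgerm_def dbl_def\<close>)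
    thus ?thesis using Inl by (simp add: dfun_def)
  next
    case (Inr j)
    have "agerm (dbl X) (dpt x x) (\<lambda>z. g (p2 z) $ j)"
      by (rule agerm_comp_lin[OF linear_p2 p2_smult]) (use assms in \<open>auto simp: vgerm_def dbl_def\<close>)
    thus ?thesis using Inr by (simp add: dfun_def)
  qed
qed

lemma genmod_transfer:
  assumes "s \<in> gen_mod (dbl X) (dpt x x) (dfun ` N)"
  shows "(\<lambda>z. pd \<psi> z (s z)) \<in> gen_mod (dbl X) (dpt x x) (dfun ` gen_mod X x (psi_dot \<psi> ` N))"
proof -
  obtain k b t U where bt: "\<forall>i<(k::nat). agerm (dbl X) (dpt x x) (b i) \<and> t i \<in> dfun ` N"
    and U: "open U" "dpt x x \<in> U" "\<forall>z\<in>dbl X \<inter> U. s z = (\<Sum>i<k. b i z *s t i z)"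
    using assms unfolding gen_mod_def by blast
  have gen: "psi_dot \<psi> m \<in> gen_mod X x (psi_dot \<psi> ` N)" if "m \<in> N" for m
  proof -
    have A: "\<forall>i<(1::nat). agerm X x ((\<lambda>_ _. 1::complex) i) \<and> (\<lambda>_. psi_dot \<psi> m) i \<in> psi_dot \<psi> ` N"
      using that by (simp add: agerm_const)
    have B: "\<forall>z\<in>X \<inter> UNIV. psi_dot \<psi> m z = (\<Sum>i<(1::nat). (\<lambda>_ _. 1::complex) i z *s (\<lambda>_. psi_dot \<psi> m) i z)"
      by simp
    show ?thesis unfolding gen_mod_def
      apply (rule CollectI)
      apply (rule exI[of _ "1::nat"], rule exI[of _ "\<lambda>_ _. 1::complex"], rule exI[of _ "\<lambda>_. psi_dot \<psi> m"])
      apply (rule conjI[OF A])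
      apply (rule exI[of _ UNIV])
      using B by simp
  qed
  have t': "(\<lambda>z. pd \<psi> z (t i z)) \<in> dfun ` gen_mod X x (psi_dot \<psi> ` N)" if "i < k" for i
  proof -
    have "t i \<in> dfun ` N" using bt that by blast
    then obtain m where m: "m \<in> N" "t i = dfun m" by blast
    have "(\<lambda>z. pd \<psi> z (t i z)) = dfun (psi_dot \<psi> m)" using m(2) by (auto simp: pd_dfun)
    thus ?thesis using gen[OF m(1)] by blast
  qed
  have eqU: "\<forall>z\<in>dbl X \<inter> U. pd \<psi> z (s z) = (\<Sum>i<k. b i z *s pd \<psi> z (t i z))"
    using U(3) by (simp add: pd_lin)
  show ?thesis unfolding gen_mod_def
    apply (rule CollectI)
    apply (rule exI[of _ k], rule exI[of _ b], rule exI[of _ "\<lambda>i z. pd \<psi> z (t i z)"])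
    apply (rule conjI)
    apply (intro allI impI conjI)
    using bt apply blast
    using t'[unfolded gen_mod_def] apply blast
    apply (rule exI[of _ U])
    using U(1,2) eqU by simp
qed

theorem propositionP23:
  fixes X :: "(complex^'n) set"
    and M :: "complex^'n \<Rightarrow> (complex^'n \<Rightarrow> complex^'p) set"
  assumes "analytic_set X"
    and "\<forall>x\<in>X. submod_stalk X x (M x)"
  shows "\<forall>x\<in>X. MS1 X M x \<subseteq> MS2 X M x"
proof (intro ballI subsetI)
  fix x h assume "x \<in> X" and h: "h \<in> MS1 X M x"
  have hv: "vgerm X x h" and hc: "dfun h \<in> int_cl (dbl X) (dpt x x) (gen_mod (dbl X) (dpt x x) (dfun ` M x))"
    using h unfolding MS1_def lip_sat_def by auto
  show "h \<in> MS2 X M x" unfolding MS2_def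
  proof (intro CollectI conjI allI impI hv)
    fix \<psi> :: "complex^'n \<Rightarrow> complex^'p" assume psi: "vgerm X x \<psi>"
    have v1: "vgerm X x (psi_dot \<psi> h)" using vgerm_psi[OF hv psi] .
    have "dfun (psi_dot \<psi> h) \<in> int_cl (dbl X) (dpt x x)
            (gen_mod (dbl X) (dpt x x) (dfun ` gen_mod X x (psi_dot \<psi> ` M x)))"
      unfolding int_cl_def
    proof (intro CollectI conjI allI impI vgerm_dfun[OF v1])
      fix \<phi> assume phi: "acurve (dbl X) (dpt x x) \<phi>"
      obtain e k a s where e: "e > 0" and as: "\<forall>i<(k::nat). a i holomorphic_on ball 0 e \<and>
           s i \<in> gen_mod (dbl X) (dpt x x) (dfun ` M x)"
        and eq: "\<forall>t\<in>ball 0 e. dfun h (\<phi> t) = (\<Sum>i<k. a i t *s s i (\<phi> t))"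
        using hc phi unfolding int_cl_def by blast
      have g: "\<forall>i<k. a i holomorphic_on ball 0 e \<and> (\<lambda>z. pd \<psi> z (s i z)) \<in>
           gen_mod (dbl X) (dpt x x) (dfun ` gen_mod X x (psi_dot \<psi> ` M x))"
        using as by (simp add: genmod_transfer)
      have q: "\<forall>t\<in>ball 0 e. dfun (psi_dot \<psi> h) (\<phi> t) = (\<Sum>i<k. a i t *s pd \<psi> (\<phi> t) (s i (\<phi> t)))"
        using eq by (simp add: dfun_psi pd_lin)
      show "\<exists>e>0. \<exists>(k::nat) a s. (\<forall>i<k. a i holomorphic_on ball 0 e \<and> s i \<in>
           gen_mod (dbl X) (dpt x x) (dfun ` gen_mod X x (psi_dot \<psi> ` M x))) \<and>
          (\<forall>t\<in>ball 0 e. dfun (psi_dot \<psi> h) (\<phi> t) = (\<Sum>i<k. a i t *s s i (\<phi> t)))"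
        apply (rule exI[where x=e]) apply (rule conjI) apply (rule e) apply (rule exI[where x=k]) apply (rule exI[where x=a]) apply (rule exI[where x="\<lambda>i z. pd \<psi> z (s i z)"])
        using g q by simp
    qed
    thus "psi_dot \<psi> h \<in> lip_sat X x (gen_mod X x (psi_dot \<psi> ` M x))"
      unfolding lip_sat_def using v1 by blast
  qed
qed

end
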